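(* Let $\mathcal{V}$ be a real vector space of dimension $d$, let $\tau\in\vee^2\mathcal{V}^*$ have rank $p+1$ and Lorentzian signature, and let $Lf_p(\mathcal{V},\tau)=\{(\tau_0,\dots,\tau_p)\in\mathcal{V}^{p+1}:\tau(\tau_A,\tau_B)=\eta_{AB}\}$ be the space of longitudinal frames. Then the longitudinal group $LG_p$, realised as the set of pairs $(\Lambda,V)$ with $\Lambda\in O(1,p)$ and $V=(V_0,\dots,V_p)\in\mathrm{Ker}(\tau)^{p+1}$, acts on $Lf_p(\mathcal{V},\tau)$ from the right by $\tau_A\cdot(\Lambda,V)={\Lambda^A}_B\tau_A+V_B$, and this action is free and transitive: for every $\tau_A,\tau'_A\in Lf_p(\mathcal{V},\tau)$ there is exactly one pair $(\Lambda,V)$ with $\tau'_B={\Lambda^A}_B\tau_A+V_B$. Thus $Lf_p(\mathcal{V},\tau)$ is an $LG_p$-torsor.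
   Context: $\eta_{AB}=\mathrm{diag}(-1,1,\dots,1)$; $\mathrm{Ker}(\tau)=\{v\in\mathcal{V}:\tau(v,\cdot)=0\}$, of dimension $d-p-1$. The longitudinal group $LG_p$ is the group of block matrices $\begin{pmatrix}\Lambda&0\\ v&\mathbb{1}\end{pmatrix}$ with $\Lambda\in O(1,p)$ and $v\in\mathbb{R}^{(d-p-1)\times(p+1)}$; its action on longitudinal frames is expressed with $V_B={v^i}_Be_i$ for a basis $e_i$ of $\mathrm{Ker}(\tau)$. *)

theory Defs
  imports "HOL-Analysis.Analysis"
begin

definition eta :: "nat \<Rightarrow> nat \<Rightarrow> real" where
  "eta A B = (if A = B then (if A = 0 then -1 else 1) else 0)"

definition sym_bilinear_form :: "('v::euclidean_space \<Rightarrow> 'v \<Rightarrow> real) \<Rightarrow> bool" where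
  "sym_bilinear_form tau \<longleftrightarrow> bilinear tau \<and> (\<forall>x y. tau x y = tau y x)"

text \<open>tau has rank p+1 and Lorentzian signature: in some basis e_0,...,e_{d-1} of 'v
  it is diag(-1,1,...,1,0,...,0) with exactly one -1, p entries +1 and d-p-1 zeros
  (Sylvester normal form).\<close>
definition lorentzian_rank :: "('v::euclidean_space \<Rightarrow> 'v \<Rightarrow> real) \<Rightarrow> nat \<Rightarrow> bool" where
  "lorentzian_rank tau p \<longleftrightarrow> p < DIM('v) \<and>
     (\<exists>e :: nat \<Rightarrow> 'v. inj_on e {..<DIM('v)} \<and> independent (e ` {..<DIM('v)}) \<and>
        (\<forall>i<DIM('v). \<forall>j<DIM('v).
           tau (e i) (e j) = (if i = j then (if i = 0 then -1 else if i \<le> p then 1 else 0) else 0)))"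

definition Ker :: "('v::euclidean_space \<Rightarrow> 'v \<Rightarrow> real) \<Rightarrow> 'v set" where
  "Ker tau = {v. \<forall>w. tau v w = 0}"

text \<open>Longitudinal frames (tau_0,...,tau_p), stored as functions nat => 'v vanishing beyond p.\<close>
definition Lf :: "nat \<Rightarrow> ('v::euclidean_space \<Rightarrow> 'v \<Rightarrow> real) \<Rightarrow> (nat \<Rightarrow> 'v) set" where
  "Lf p tau = {f. (\<forall>A\<le>p. \<forall>B\<le>p. tau (f A) (f B) = eta A B) \<and> (\<forall>A>p. f A = 0)}"

text \<open>O(1,p): matrices Lambda (entry Lambda A B = Lambda^A_B, indices 0..p, zero outside)
  with Lambda^T eta Lambda = eta.\<close>
definition O1p :: "nat \<Rightarrow> (nat \<Rightarrow> nat \<Rightarrow> real) set" where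
  "O1p p = {L. (\<forall>B\<le>p. \<forall>C\<le>p. (\<Sum>A\<le>p. \<Sum>D\<le>p. L A B * eta A D * L D C) = eta B C) \<and>
               (\<forall>A B. (p < A \<or> p < B) \<longrightarrow> L A B = 0)}"

definition LG :: "nat \<Rightarrow> ('v::euclidean_space \<Rightarrow> 'v \<Rightarrow> real) \<Rightarrow> ((nat \<Rightarrow> nat \<Rightarrow> real) \<times> (nat \<Rightarrow> 'v)) set" where
  "LG p tau = {(L, V). L \<in> O1p p \<and> (\<forall>B\<le>p. V B \<in> Ker tau) \<and> (\<forall>B>p. V B = 0)}"

definition act :: "nat \<Rightarrow> (nat \<Rightarrow> 'v::euclidean_space) \<Rightarrow> (nat \<Rightarrow> nat \<Rightarrow> real) \<times> (nat \<Rightarrow> 'v) \<Rightarrow> (nat \<Rightarrow> 'v)" where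
  "act p f g = (\<lambda>B. if B \<le> p then (\<Sum>A\<le>p. fst g A B *\<^sub>R f A) + snd g B else 0)"

text \<open>Group law of LG_p, from the block-matrix product
  [[L1,0],[v1,1]] [[L2,0],[v2,1]] = [[L1 L2,0],[v1 L2 + v2,1]].\<close>
definition LG_mult :: "nat \<Rightarrow> (nat \<Rightarrow> nat \<Rightarrow> real) \<times> (nat \<Rightarrow> 'v::euclidean_space) \<Rightarrow>
    (nat \<Rightarrow> nat \<Rightarrow> real) \<times> (nat \<Rightarrow> 'v) \<Rightarrow> (nat \<Rightarrow> nat \<Rightarrow> real) \<times> (nat \<Rightarrow> 'v)" where
  "LG_mult p g h =
     ((\<lambda>A C. if A \<le> p \<and> C \<le> p then (\<Sum>B\<le>p. fst g A B * fst h B C) else 0),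
      (\<lambda>C. if C \<le> p then (\<Sum>B\<le>p. fst h B C *\<^sub>R snd g B) + snd h C else 0))"

definition LG_one :: "nat \<Rightarrow> (nat \<Rightarrow> nat \<Rightarrow> real) \<times> (nat \<Rightarrow> 'v::euclidean_space)" where
  "LG_one p = ((\<lambda>A B. if A = B \<and> A \<le> p then 1 else 0), (\<lambda>_. 0))"

end

theory Submission
  imports Defs
begin

lemma tau_suml:
  assumes "bilinear tau"
  shows "tau (\<Sum>A\<in>S. g A) y = (\<Sum>A\<in>S. tau (g A) y)"
  by (induction S rule: infinite_finite_induct)
     (simp_all add: bilinear_ladd[OF assms] bilinear_lzero[OF assms])

lemma tau_sumr:
  assumes "bilinear tau"
  shows "tau y (\<Sum>A\<in>S. g A) = (\<Sum>A\<in>S. tau y (g A))"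
  by (induction S rule: infinite_finite_induct)
     (simp_all add: bilinear_radd[OF assms] bilinear_rzero[OF assms])

lemma tau_suml_scale:
  assumes "bilinear tau"
  shows "tau (\<Sum>A\<in>S. c A *\<^sub>R f A) y = (\<Sum>A\<in>S. c A * tau (f A) y)"
  by (simp add: tau_suml[OF assms] bilinear_lmul[OF assms])

lemma tau_sumr_scale:
  assumes "bilinear tau"
  shows "tau y (\<Sum>A\<in>S. c A *\<^sub>R f A) = (\<Sum>A\<in>S. c A * tau y (f A))"
  by (simp add: tau_sumr[OF assms] bilinear_rmul[OF assms])

lemma eta_sum:
  assumes "(C::nat) \<le> p"
  shows "(\<Sum>A\<le>p. c A * eta A C) = c C * eta C C"
proof -
  have "(\<Sum>A\<le>p. c A * eta A C) = (\<Sum>A\<le>p. if A = C then c C * eta C C else 0)"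
    by (rule sum.cong) (auto simp: eta_def)
  also have "\<dots> = c C * eta C C" using assms by simp
  finally show ?thesis .
qed

lemma eta_sum':
  assumes "(C::nat) \<le> p"
  shows "(\<Sum>A\<le>p. eta C A * c A) = c C * eta C C"
proof -
  have "\<And>A. eta C A * c A = c A * eta A C" by (simp add: eta_def)
  then have "(\<Sum>A\<le>p. eta C A * c A) = (\<Sum>A\<le>p. c A * eta A C)" by (rule sum.cong[OF refl])
  then show ?thesis using eta_sum[OF assms, of c] by simp
qed

lemma eta_sq: "eta A A * eta A A = 1"
  by (simp add: eta_def)

lemma eta_nz: "eta A A \<noteq> 0"
  by (simp add: eta_def)


lemma key:
  fixes tau :: "'v::euclidean_space \<Rightarrow> 'v \<Rightarrow> real"
  assumes bil: "bilinear tau" and sym: "\<forall>x y. tau x y = tau y x"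
    and lr: "lorentzian_rank tau p" and f: "f \<in> Lf p tau"
    and y: "\<forall>C\<le>p. tau y (f C) = 0"
  shows "y \<in> Ker tau"
proof -
  from lr obtain e :: "nat \<Rightarrow> 'v" where pd: "p < DIM('v)" and inj: "inj_on e {..<DIM('v)}"
    and ind: "independent (e ` {..<DIM('v)})"
    and te: "\<forall>i<DIM('v). \<forall>j<DIM('v). tau (e i) (e j) =
       (if i = j then (if i = 0 then -1 else if i \<le> p then 1 else 0) else 0)"
    unfolding lorentzian_rank_def by blast
  have fL: "\<forall>A\<le>p. \<forall>B\<le>p. tau (f A) (f B) = eta A B" using f by (simp add: Lf_def)
  have "dim (span (e ` {..<DIM('v)})) = DIM('v)"
    using dim_span_eq_card_independent[OF ind] card_image[OF inj] by simp
  then have spanE: "span (e ` {..<DIM('v)}) = UNIV"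
    using dim_eq_full dim_span by metis
  have subK: "subspace (Ker tau)"
    unfolding subspace_def Ker_def
    by (auto simp: bilinear_lzero[OF bil] bilinear_ladd[OF bil] bilinear_lmul[OF bil])
  have eK: "e i \<in> Ker tau" if "p < i" "i < DIM('v)" for i
  proof -
    have "tau (e i) w = 0" for w
    proof (rule span_induct[where P="\<lambda>w. tau (e i) w = 0"])
      show "w \<in> span (e ` {..<DIM('v)})" using spanE by simp
      show "subspace {w. tau (e i) w = 0}"
        unfolding subspace_def
        by (auto simp: bilinear_rzero[OF bil] bilinear_radd[OF bil] bilinear_rmul[OF bil])
      show "tau (e i) x = 0" if "x \<in> e ` {..<DIM('v)}" for x
        using that te \<open>p < i\<close> \<open>i < DIM('v)\<close> by auto
    qed
    then show ?thesis by (simp add: Ker_def)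
  qed
  have dimK: "DIM('v) - Suc p \<le> dim (Ker tau)"
  proof -
    have sub: "{Suc p..<DIM('v)} \<subseteq> {..<DIM('v)}" by auto
    have "card (e ` {Suc p..<DIM('v)}) = DIM('v) - Suc p"
      using card_image[OF inj_on_subset[OF inj sub]] by simp
    moreover have "e ` {Suc p..<DIM('v)} \<subseteq> Ker tau" using eK by auto
    moreover have "independent (e ` {Suc p..<DIM('v)})"
      using independent_mono[OF ind] sub by blast
    ultimately show ?thesis using independent_card_le_dim by metis
  qed
  have injf: "inj_on f {..p}"
  proof (rule inj_onI)
    fix A C assume A: "A \<in> {..p}" and C: "C \<in> {..p}" and eq: "f A = f C"
    show "A = C"
    proof (rule ccontr)
      assume "A \<noteq> C"
      then have "tau (f A) (f C) = 0" using fL A C by (simp add: eta_def)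
      moreover have "tau (f A) (f C) = eta A A" using fL A C eq by (metis atMost_iff)
      ultimately show False using eta_nz by simp
    qed
  qed
  have comb0: "u C = 0" if "(\<Sum>A\<le>p. u A *\<^sub>R f A) \<in> Ker tau" "C \<le> p" for u C
  proof -
    have "tau (\<Sum>A\<le>p. u A *\<^sub>R f A) (f C) = 0" using that by (simp add: Ker_def)
    then have "(\<Sum>A\<le>p. u A * eta A C) = 0"
      using fL that(2) by (simp add: tau_suml_scale[OF bil])
    then show ?thesis using eta_sum[OF that(2)] eta_nz by simp
  qed
  have indf: "independent (f ` {..p})"
    unfolding independent_explicit
  proof (intro conjI allI impI ballI)
    show "finite (f ` {..p})" by simp
    fix c v assume s: "(\<Sum>v\<in>f ` {..p}. c v *\<^sub>R v) = 0" and v: "v \<in> f ` {..p}"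
    have "(\<Sum>A\<le>p. c (f A) *\<^sub>R f A) = 0" using s sum.reindex[OF injf, of "\<lambda>v. c v *\<^sub>R v"] by simp
    then have "(\<Sum>A\<le>p. c (f A) *\<^sub>R f A) \<in> Ker tau" using subK subspace_0 by metis
    then show "c v = 0" using comb0[of "\<lambda>A. c (f A)"] v by auto
  qed
  define W where "W = span (f ` {..p})"
  have dimW: "dim W = Suc p"
    unfolding W_def using dim_span_eq_card_independent[OF indf] card_image[OF injf] by simp
  have WK: "W \<inter> Ker tau = {0}"
  proof
    show "W \<inter> Ker tau \<subseteq> {0}"
    proof
      fix x assume x: "x \<in> W \<inter> Ker tau"
      then obtain u where "x = (\<Sum>v\<in>f ` {..p}. u v *\<^sub>R v)"
        unfolding W_def using span_finite[of "f ` {..p}"] by auto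
      then have xe: "x = (\<Sum>A\<le>p. u (f A) *\<^sub>R f A)"
        using sum.reindex[OF injf, of "\<lambda>v. u v *\<^sub>R v"] by simp
      then have "\<forall>C\<le>p. u (f C) = 0" using comb0[of "\<lambda>A. u (f A)"] x by auto
      then show "x \<in> {0}" using xe by simp
    qed
    show "{0} \<subseteq> W \<inter> Ker tau" unfolding W_def using subK subspace_0 span_zero by blast
  qed
  have dim0: "dim (W \<inter> Ker tau) = 0"
    using WK dim_span_eq_card_independent[of "{}"] by simp
  define S where "S = {x + y |x y. x \<in> W \<and> y \<in> Ker tau}"
  have subS: "subspace S" unfolding S_def W_def using subspace_sums[OF subspace_span subK] by simp
  have "dim S + dim (W \<inter> Ker tau) = dim W + dim (Ker tau)"
    unfolding S_def W_def using dim_sums_Int[OF subspace_span subK] by simp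
  then have "dim S = DIM('v)" using dimW dimK dim0 dim_subset_UNIV[of S] pd by linarith
  then have "span S = UNIV" using dim_eq_full by metis
  then have SU: "S = UNIV" using span_eq_iff subS by metis
  have "tau y x = 0" for x
  proof -
    have "x \<in> S" using SU by simp
    then obtain w k where x: "x = w + k" and w: "w \<in> W" and k: "k \<in> Ker tau"
      unfolding S_def by blast
    from w obtain u where "w = (\<Sum>v\<in>f ` {..p}. u v *\<^sub>R v)"
      unfolding W_def using span_finite[of "f ` {..p}"] by auto
    then have we: "w = (\<Sum>A\<le>p. u (f A) *\<^sub>R f A)"
      using sum.reindex[OF injf, of "\<lambda>v. u v *\<^sub>R v"] by simp
    have "tau y w = 0" using we y by (simp add: tau_sumr_scale[OF bil])
    moreover have "tau k y = 0" using k unfolding Ker_def by blast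
    moreover have "tau y k = tau k y" using sym by blast
    ultimately show ?thesis using x bilinear_radd[OF bil] by simp
  qed
  then show ?thesis unfolding Ker_def by blast
qed


lemma act_Lf:
  fixes tau :: "'v::euclidean_space \<Rightarrow> 'v \<Rightarrow> real"
  assumes bil: "bilinear tau" and sym: "\<forall>x y. tau x y = tau y x"
    and f: "f \<in> Lf p tau" and g: "g \<in> LG p tau"
  shows "act p f g \<in> Lf p tau"
proof -
  obtain L V where gLV: "g = (L, V)" by fastforce
  have L: "L \<in> O1p p" and VK: "\<forall>B\<le>p. V B \<in> Ker tau" using g gLV by (auto simp: LG_def)
  have fL: "\<forall>A\<le>p. \<forall>B\<le>p. tau (f A) (f B) = eta A B" using f by (simp add: Lf_def)
  have K1: "tau (V B) x = 0" if "B \<le> p" for B x using VK that by (simp add: Ker_def)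
  have K2: "tau x (V B) = 0" if "B \<le> p" for B x using K1[OF that, of x] sym[rule_format, of x "V B"] by simp
  have "tau (act p f g B) (act p f g C) = eta B C" if B: "B \<le> p" and C: "C \<le> p" for B C
  proof -
    have "tau (act p f g B) (act p f g C) =
        tau (\<Sum>A\<le>p. L A B *\<^sub>R f A) (\<Sum>D\<le>p. L D C *\<^sub>R f D)"
      using B C by (simp add: act_def gLV bilinear_ladd[OF bil] bilinear_radd[OF bil] K1 K2)
    also have "\<dots> = (\<Sum>A\<le>p. L A B * tau (f A) (\<Sum>D\<le>p. L D C *\<^sub>R f D))"
      by (simp only: tau_suml_scale[OF bil])
    also have "\<dots> = (\<Sum>A\<le>p. L A B * (\<Sum>D\<le>p. L D C * eta A D))"
      using fL C by (intro sum.cong[OF refl]) (simp add: tau_sumr_scale[OF bil])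
    also have "\<dots> = (\<Sum>A\<le>p. \<Sum>D\<le>p. L A B * eta A D * L D C)"
      by (simp add: sum_distrib_left mult_ac)
    also have "\<dots> = eta B C" using L B C by (simp add: O1p_def)
    finally show ?thesis .
  qed
  then show ?thesis by (simp add: Lf_def act_def)
qed

lemma act_one:
  assumes f: "f \<in> Lf p tau"
  shows "act p f (LG_one p) = f"
proof
  fix B
  show "act p f (LG_one p) B = f B"
  proof (cases "B \<le> p")
    case True
    have "(\<Sum>A\<le>p. (if A = B \<and> A \<le> p then 1 else 0) *\<^sub>R f A) = (\<Sum>A\<le>p. if A = B then f B else 0)"
      by (rule sum.cong) auto
    then show ?thesis using True by (simp add: act_def LG_one_def)
  next
    case False
    then show ?thesis using f by (simp add: act_def Lf_def)
  qed
qed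

lemma act_comp:
  "act p (act p f g) h = act p f (LG_mult p g h)"
proof
  fix B
  show "act p (act p f g) h B = act p f (LG_mult p g h) B"
  proof (cases "B \<le> p")
    case True
    have e1: "(\<Sum>A\<le>p. fst h A B *\<^sub>R act p f g A) =
        (\<Sum>A\<le>p. \<Sum>C\<le>p. (fst h A B * fst g C A) *\<^sub>R f C) + (\<Sum>A\<le>p. fst h A B *\<^sub>R snd g A)"
      by (simp add: act_def sum.distrib[symmetric] scaleR_add_right scaleR_sum_right)
    have e2: "(\<Sum>C\<le>p. fst (LG_mult p g h) C B *\<^sub>R f C) =
        (\<Sum>C\<le>p. \<Sum>A\<le>p. (fst g C A * fst h A B) *\<^sub>R f C)"
      using True by (simp add: LG_mult_def scaleR_sum_left)
    have e3: "(\<Sum>A\<le>p. \<Sum>C\<le>p. (fst h A B * fst g C A) *\<^sub>R f C) =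
        (\<Sum>C\<le>p. \<Sum>A\<le>p. (fst g C A * fst h A B) *\<^sub>R f C)"
      by (subst sum.swap) (simp add: mult.commute)
    show ?thesis using True e1 e2 e3
      by (simp add: act_def LG_mult_def add.assoc)
  next
    case False
    then show ?thesis by (simp add: act_def)
  qed
qed

lemma act_unique:
  fixes tau :: "'v::euclidean_space \<Rightarrow> 'v \<Rightarrow> real"
  assumes bil: "bilinear tau" and sym: "\<forall>x y. tau x y = tau y x"
    and f: "f \<in> Lf p tau" and g1: "g1 \<in> LG p tau" and g2: "g2 \<in> LG p tau"
    and eq: "act p f g1 = act p f g2"
  shows "g1 = g2"
proof -
  have fL: "\<forall>A\<le>p. \<forall>B\<le>p. tau (f A) (f B) = eta A B" using f by (simp add: Lf_def)
  have coef: "tau (f A) (act p f g B) = fst g A B * eta A A"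
    if g: "g \<in> LG p tau" and A: "A \<le> p" and B: "B \<le> p" for g A B
  proof -
    obtain L V where gLV: "g = (L, V)" by fastforce
    have "V B \<in> Ker tau" using g gLV B by (auto simp: LG_def)
    then have "tau (V B) (f A) = 0" unfolding Ker_def by blast
    then have "tau (f A) (V B) = 0" using sym[rule_format, of "f A" "V B"] by simp
    then have "tau (f A) (act p f g B) = (\<Sum>D\<le>p. L D B * eta A D)"
      using B A fL by (simp add: act_def gLV bilinear_radd[OF bil] tau_sumr_scale[OF bil])
    also have "\<dots> = (\<Sum>D\<le>p. eta A D * L D B)" by (simp add: mult.commute)
    also have "\<dots> = L A B * eta A A" using eta_sum'[OF A] by simp
    finally show ?thesis using gLV by simp
  qed
  have Leq: "fst g1 = fst g2"
  proof (intro ext)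
    fix A B
    show "fst g1 A B = fst g2 A B"
    proof (cases "A \<le> p \<and> B \<le> p")
      case True
      have "fst g1 A B * eta A A = tau (f A) (act p f g1 B)" using coef[OF g1, of A B] True by simp
      also have "\<dots> = tau (f A) (act p f g2 B)" using eq by simp
      also have "\<dots> = fst g2 A B * eta A A" using coef[OF g2, of A B] True by simp
      finally have "fst g1 A B * eta A A = fst g2 A B * eta A A" .
      then show ?thesis using eta_nz by simp
    next
      case False
      then show ?thesis using g1 g2 by (auto simp: LG_def O1p_def)
    qed
  qed
  have Veq: "snd g1 = snd g2"
  proof
    fix B
    show "snd g1 B = snd g2 B"
    proof (cases "B \<le> p")
      case True
      have "act p f g1 B = act p f g2 B" using eq by simp
      then show ?thesis using True Leq by (simp add: act_def)
    next
      case False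
      then show ?thesis using g1 g2 by (auto simp: LG_def)
    qed
  qed
  show ?thesis using Leq Veq by (simp add: prod_eq_iff)
qed

lemma act_exists:
  fixes tau :: "'v::euclidean_space \<Rightarrow> 'v \<Rightarrow> real"
  assumes bil: "bilinear tau" and sym: "\<forall>x y. tau x y = tau y x"
    and lr: "lorentzian_rank tau p"
    and f: "f \<in> Lf p tau" and f': "f' \<in> Lf p tau"
  shows "\<exists>g. g \<in> LG p tau \<and> f' = act p f g"
proof -
  have fL: "\<forall>A\<le>p. \<forall>B\<le>p. tau (f A) (f B) = eta A B" using f by (simp add: Lf_def)
  have fL': "\<forall>A\<le>p. \<forall>B\<le>p. tau (f' A) (f' B) = eta A B" using f' by (simp add: Lf_def)
  define L where "L = (\<lambda>A B. if A \<le> p \<and> B \<le> p then eta A A * tau (f A) (f' B) else 0)"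
  define V where "V = (\<lambda>B. if B \<le> p then f' B - (\<Sum>A\<le>p. L A B *\<^sub>R f A) else 0)"
  have VK: "V B \<in> Ker tau" if B: "B \<le> p" for B
  proof (rule key[OF bil sym lr f], intro allI impI)
    fix C assume C: "C \<le> p"
    have "tau (V B) (f C) = tau (f' B) (f C) - (\<Sum>A\<le>p. L A B * eta A C)"
      using B C fL by (simp add: V_def bilinear_lsub[OF bil] tau_suml_scale[OF bil])
    also have "\<dots> = tau (f' B) (f C) - L C B * eta C C" using eta_sum[OF C] by simp
    also have "\<dots> = tau (f' B) (f C) - (eta C C * eta C C) * tau (f C) (f' B)"
      using B C by (simp add: L_def mult_ac)
    also have "\<dots> = 0" using eta_sq[of C] sym[rule_format, of "f C" "f' B"] by simp
    finally show "tau (V B) (f C) = 0" .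
  qed
  have act_eq: "f' = act p f (L, V)"
  proof
    fix B show "f' B = act p f (L, V) B"
      using f' by (cases "B \<le> p") (auto simp: act_def V_def Lf_def)
  qed
  have K1: "tau (V B) x = 0" if "B \<le> p" for B x using VK[OF that] by (simp add: Ker_def)
  have LO: "L \<in> O1p p"
  proof -
    have "(\<Sum>A\<le>p. \<Sum>D\<le>p. L A B * eta A D * L D C) = eta B C" if B: "B \<le> p" and C: "C \<le> p" for B C
    proof -
      have "(\<Sum>A\<le>p. \<Sum>D\<le>p. L A B * eta A D * L D C) = (\<Sum>A\<le>p. L A B * (\<Sum>D\<le>p. eta A D * L D C))"
        by (simp add: sum_distrib_left mult_ac)
      also have "\<dots> = (\<Sum>A\<le>p. L A B * (L A C * eta A A))"
        by (rule sum.cong[OF refl]) (simp add: eta_sum')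
      also have "\<dots> = (\<Sum>A\<le>p. L A B * tau (f A) (f' C))"
        by (rule sum.cong[OF refl]) (simp add: L_def C eta_sq mult_ac)
      also have "\<dots> = tau (\<Sum>A\<le>p. L A B *\<^sub>R f A) (f' C)" by (simp add: tau_suml_scale[OF bil])
      also have "\<dots> = tau (f' B - V B) (f' C)" using B by (simp add: V_def)
      also have "\<dots> = tau (f' B) (f' C)" using K1[OF B] by (simp add: bilinear_lsub[OF bil])
      also have "\<dots> = eta B C" using fL' B C by simp
      finally show ?thesis .
    qed
    moreover have "\<forall>A B. (p < A \<or> p < B) \<longrightarrow> L A B = 0" by (auto simp: L_def)
    ultimately show ?thesis by (simp add: O1p_def)
  qed
  have "(L, V) \<in> LG p tau" using LO VK by (simp add: LG_def V_def)
  then show ?thesis using act_eq by blast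
qed

theorem proposition2:
  fixes tau :: "'v::euclidean_space \<Rightarrow> 'v \<Rightarrow> real" and p :: nat
  assumes "sym_bilinear_form tau"
    and "lorentzian_rank tau p"
  shows "(\<forall>f\<in>Lf p tau. \<forall>g\<in>LG p tau. act p f g \<in> Lf p tau)
       \<and> (\<forall>f\<in>Lf p tau. act p f (LG_one p) = f)
       \<and> (\<forall>f\<in>Lf p tau. \<forall>g\<in>LG p tau. \<forall>h\<in>LG p tau.
            act p (act p f g) h = act p f (LG_mult p g h))
       \<and> (\<forall>f\<in>Lf p tau. \<forall>f'\<in>Lf p tau. \<exists>!g. g \<in> LG p tau \<and> f' = act p f g)"
proof -
  have bil: "bilinear tau" and sym: "\<forall>x y. tau x y = tau y x"
    using assms(1) by (auto simp: sym_bilinear_form_def)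
  have "\<exists>!g. g \<in> LG p tau \<and> f' = act p f g" if f: "f \<in> Lf p tau" and f': "f' \<in> Lf p tau" for f f'
  proof -
    obtain g where g: "g \<in> LG p tau \<and> f' = act p f g" using act_exists[OF bil sym assms(2) f f'] by blast
    show ?thesis
    proof (rule ex1I[of _ g])
      show "g \<in> LG p tau \<and> f' = act p f g" by (rule g)
      fix g' assume "g' \<in> LG p tau \<and> f' = act p f g'"
      then have "g' \<in> LG p tau" and "act p f g' = act p f g" using g by auto
      then show "g' = g" using act_unique[OF bil sym f, of g' g] g by blast
    qed
  qed
  moreover have "\<forall>f\<in>Lf p tau. \<forall>g\<in>LG p tau. act p f g \<in> Lf p tau"
    using act_Lf[OF bil sym] by blast
  moreover have "\<forall>f\<in>Lf p tau. act p f (LG_one p) = f" using act_one by blast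
  moreover have "\<forall>f\<in>Lf p tau. \<forall>g\<in>LG p tau. \<forall>h\<in>LG p tau.
            act p (act p f g) h = act p f (LG_mult p g h)" using act_comp by blast
  ultimately show ?thesis by blast
qed

end
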